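(* Let $\nu_n,\nu\in\Delta(V)$ with $\nu_n\to\nu$ weakly. Then $\pi^*(c,\nu)\le\liminf_{n\to\infty}\pi^*(c,\nu_n)$.
   Context: $V\subset\mathbb{R}$ is compact and $c:V\to\mathbb{R}$ is continuous with $v-c(v)\ge0$ on $V$. $\Delta(V)$ denotes Borel probability measures on $V$. For $\nu\in\Delta(V)$ and $p\in V$, $\pi(c,\nu,p)=\int_{\{v\ge p\}}(p-c(v))\nu(dv)$ and $\pi^*(c,\nu)=\max_{p\in V}\pi(c,\nu,p)$. *)

theory Defs
  imports "HOL-Probability.Probability"
begin

definition Delta :: "real set \<Rightarrow> real measure set" where
  "Delta V = {M. prob_space M \<and> sets M = sets (restrict_space borel V)}"

definition weak_conv_on :: "real set \<Rightarrow> (nat \<Rightarrow> real measure) \<Rightarrow> real measure \<Rightarrow> bool" where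
  "weak_conv_on V Ms M \<longleftrightarrow>
     (\<forall>f :: real \<Rightarrow> real. continuous_on V f \<and> bounded (f ` V) \<longrightarrow>
        (\<lambda>n. integral\<^sup>L (Ms n) f) \<longlonglongrightarrow> integral\<^sup>L M f)"

definition profit :: "(real \<Rightarrow> real) \<Rightarrow> real set \<Rightarrow> real measure \<Rightarrow> real \<Rightarrow> real" where
  "profit c V \<nu> p = (LINT v:{v\<in>V. p \<le> v}|\<nu>. p - c v)"

text \<open>pi^*(c,nu) = max over p in V of pi(c,nu,p); written as a supremum (the maximum
  is attained, so this agrees with the paper's max).\<close>
definition profit_star :: "(real \<Rightarrow> real) \<Rightarrow> real set \<Rightarrow> real measure \<Rightarrow> real" where
  "profit_star c V \<nu> = (SUP p\<in>V. profit c V \<nu> p)"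

end

theory Submission
  imports Defs
begin

lemma Delta_space: "M \<in> Delta V \<Longrightarrow> space M = V"
  unfolding Delta_def
  by (metis (mono_tags, lifting) mem_Collect_eq sets_eq_imp_space_eq space_restrict_space2 space_borel sets_UNIV UNIV_I space_restrict_space inf_top.right_neutral)

lemma Delta_prob: "M \<in> Delta V \<Longrightarrow> prob_space M"
  unfolding Delta_def by simp

lemma Delta_meas:
  assumes "M \<in> Delta V" "f \<in> borel_measurable (restrict_space borel V)"
  shows "f \<in> borel_measurable M"
proof -
  have "sets M = sets (restrict_space borel V)" using assms(1) unfolding Delta_def by simp
  then show ?thesis using assms(2) measurable_cong_sets by blast
qed

lemma Delta_integrable:
  fixes f :: "real \<Rightarrow> real"
  assumes "M \<in> Delta V" "f \<in> borel_measurable (restrict_space borel V)"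
    and "\<forall>v\<in>V. \<bar>f v\<bar> \<le> (B::real)"
  shows "integrable M f"
proof -
  interpret prob_space M using Delta_prob[OF assms(1)] .
  show ?thesis
    apply (rule integrable_const_bound[where B=B])
    using assms Delta_space[OF assms(1)] Delta_meas[OF assms(1,2)] by auto
qed

lemma ind_meas:
  fixes V :: "real set" and c :: "real \<Rightarrow> real"
  assumes "closed V" "continuous_on V c"
  shows "(\<lambda>v. indicator {v\<in>V. p \<le> v} v * (q - c v)) \<in> borel_measurable (restrict_space borel V)"
proof -
  have s: "{v\<in>V. p \<le> v} \<in> sets (restrict_space borel V)"
  proof -
    have "{v\<in>V. p \<le> v} = V \<inter> {p..}" by auto
    moreover have "closed (V \<inter> {p..})" using assms(1) by (metis closed_Int closed_atLeast)
    ultimately show ?thesis using assms(1) by (subst sets_restrict_space_iff) (auto intro: borel_closed)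
  qed
  have "(\<lambda>v. q - c v) \<in> borel_measurable (restrict_space borel V)"
    using assms(2) by (intro borel_measurable_continuous_on_restrict continuous_intros)
  then show ?thesis using s by (intro borel_measurable_times borel_measurable_indicator) auto
qed

lemma pw1:
  fixes a p q d v cv :: real
  assumes "a < p" "a \<le> q" "q \<le> p" "p - q \<le> d" "v - cv \<ge> 0"
    "a < v \<and> v < p \<longrightarrow> q \<le> v"
  shows "(if q \<le> v then 1 else 0) * (q - cv) \<ge> max 0 (min 1 ((v-a)/(p-a))) * (p - cv) - d"
proof -
  define f where "f = max 0 (min 1 ((v-a)/(p-a)))"
  have f01: "0 \<le> f" "f \<le> 1" unfolding f_def by auto
  have f0: "v \<le> a \<Longrightarrow> f = 0" unfolding f_def using assms(1)
    by (simp add: divide_nonpos_pos)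
  have f1: "p \<le> v \<Longrightarrow> f = 1" unfolding f_def using assms(1) by simp
  have "(if q \<le> v then 1 else 0) * (q - cv) \<ge> f * (p - cv) - d"
  proof (cases "q \<le> v")
    case True
    show ?thesis
    proof (cases "p \<le> v")
      case True then show ?thesis using f1 assms by simp
    next
      case False
      have "f * (p - cv) = f * (p - v) + f * (v - cv)" by algebra
      also have "\<dots> \<le> (p - v) + (v - cv)"
        using f01 False assms(5) by (intro add_mono) (auto intro: mult_left_le_one_le)
      finally have "f * (p - cv) \<le> p - cv" by simp
      then show ?thesis using True assms by simp
    qed
  next
    case False
    then have "v \<le> a" using assms by linarith
    then show ?thesis using f0 False assms by simp
  qed
  then show ?thesis unfolding f_def .
qed

lemma pw2:
  fixes a p v cv :: real
  assumes "a < p" "v - cv \<ge> 0"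
  shows "max 0 (min 1 ((v-a)/(p-a))) * (p - cv) \<ge> (if p \<le> v then 1 else 0) * (p - cv)"
proof (cases "p \<le> v")
  case True then show ?thesis using assms by simp
next
  case False
  then have "p - cv > 0" using assms by linarith
  then show ?thesis using False by simp
qed

lemma profit_eq: "profit c V M p = (LINT v|M. indicator {v\<in>V. p \<le> v} v * (p - c v))"
  unfolding profit_def set_lebesgue_integral_def by simp

lemma profit_bound:
  fixes V :: "real set" and c :: "real \<Rightarrow> real"
  assumes "M \<in> Delta V" "closed V" "continuous_on V c"
    "\<forall>v\<in>V. \<bar>p - c v\<bar> \<le> B"
  shows "\<bar>profit c V M p\<bar> \<le> B"
proof -
  interpret prob_space M using Delta_prob[OF assms(1)] .
  have sp: "space M = V" using Delta_space[OF assms(1)] .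
  have bd: "\<forall>v\<in>V. \<bar>indicator {v\<in>V. p \<le> v} v * (p - c v)\<bar> \<le> B"
    using assms(4) by (auto simp: indicator_def)
  have int: "integrable M (\<lambda>v. indicator {v\<in>V. p \<le> v} v * (p - c v))"
    by (rule Delta_integrable[OF assms(1) ind_meas[OF assms(2,3)] bd])
  have "\<bar>profit c V M p\<bar> \<le> (LINT v|M. B)"
    unfolding profit_eq
    by (rule integral_abs_bound_integral[OF int]) (use bd sp in auto)
  also have "\<dots> = B" by (simp add: prob_space)
  finally show ?thesis .
qed

theorem lemmaI4:
  fixes V :: "real set" and c :: "real \<Rightarrow> real"
    and \<nu>s :: "nat \<Rightarrow> real measure" and \<nu> :: "real measure"
  assumes "compact V"
    and "continuous_on V c"
    and "\<forall>v\<in>V. v - c v \<ge> 0"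
    and "\<forall>n. \<nu>s n \<in> Delta V"
    and "\<nu> \<in> Delta V"
    and "weak_conv_on V \<nu>s \<nu>"
  shows "ereal (profit_star c V \<nu>) \<le> liminf (\<lambda>n. ereal (profit_star c V (\<nu>s n)))"
proof -
  have cl: "closed V" using assms(1) by (rule compact_imp_closed)
  have Vne: "V \<noteq> {}"
  proof -
    interpret prob_space \<nu> using Delta_prob[OF assms(5)] .
    show ?thesis using not_empty Delta_space[OF assms(5)] by simp
  qed
  obtain B where B: "\<forall>p\<in>V. \<forall>v\<in>V. \<bar>p - c v\<bar> \<le> B"
  proof -
    have "bounded V" using assms(1) by (rule compact_imp_bounded)
    then obtain B1 where B1: "\<forall>v\<in>V. \<bar>v\<bar> \<le> B1" unfolding bounded_iff by auto
    have "bounded (c ` V)" using compact_continuous_image[OF assms(2,1)] by (rule compact_imp_bounded)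
    then obtain B2 where B2: "\<forall>v\<in>V. \<bar>c v\<bar> \<le> B2" unfolding bounded_iff by auto
    have "\<forall>p\<in>V. \<forall>v\<in>V. \<bar>p - c v\<bar> \<le> B1 + B2"
    proof (intro ballI)
      fix p v assume "p \<in> V" "v \<in> V"
      then show "\<bar>p - c v\<bar> \<le> B1 + B2" using B1 B2 by force
    qed
    then show ?thesis using that by blast
  qed
  have B0: "0 \<le> B" using B Vne by (meson abs_ge_zero all_not_in_conv order_trans)
  have pb: "\<bar>profit c V M p\<bar> \<le> B" if "M \<in> Delta V" "p \<in> V" for M p
    using profit_bound[OF that(1) cl assms(2)] B that(2) by blast
  have bdd: "bdd_above (profit c V M ` V)" if "M \<in> Delta V" for M
    unfolding bdd_above_def using pb[OF that] by (metis abs_le_D1 imageE)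
  have ps_ge: "profit c V M p \<le> profit_star c V M" if "M \<in> Delta V" "p \<in> V" for M p
    unfolding profit_star_def by (rule cSUP_upper[OF that(2) bdd[OF that(1)]])
  define L where "L = liminf (\<lambda>n. ereal (profit_star c V (\<nu>s n)))"
  obtain p0 where p0: "p0 \<in> V" using Vne by blast
  have Lge: "ereal (- B) \<le> L"
    unfolding L_def
    apply (rule Liminf_bounded)
    apply (rule always_eventually)
    using ps_ge[OF _ p0] pb[OF _ p0] assms(4) by (smt (verit) ereal_less_eq(3))
  show ?thesis
  proof (cases L)
    case PInf then show ?thesis unfolding L_def by simp
  next
    case MInf then show ?thesis using Lge by simp
  next
    case (real l)
    have key: "profit c V \<nu> p \<le> l" if pV: "p \<in> V" for p
    proof (rule field_le_epsilon)
      fix e :: real assume e: "0 < e"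
      define d where "d = e / 2"
      have d: "0 < d" using e d_def by simp
      obtain a q where aq: "a < p" "a \<le> q" "q \<le> p" "p - q \<le> d" "q \<in> V"
        "\<forall>v\<in>V. a < v \<and> v < p \<longrightarrow> q \<le> v"
      proof (cases "\<exists>q\<in>V. p - d < q \<and> q < p")
        case True
        then obtain q where "q \<in> V" "p - d < q" "q < p" by blast
        then show ?thesis using that[of q q] by force
      next
        case False
        then show ?thesis using that[of "p - d" p] d pV by force
      qed
      define g where "g v = max 0 (min 1 ((v-a)/(p-a))) * (p - c v)" for v
      have gc: "continuous_on V g" unfolding g_def using aq(1) assms(2)
        by (intro continuous_intros) auto
      have gb: "\<forall>v\<in>V. \<bar>g v\<bar> \<le> B"
      proof
        fix v assume "v \<in> V"
        have "\<bar>g v\<bar> = \<bar>max 0 (min 1 ((v-a)/(p-a)))\<bar> * \<bar>p - c v\<bar>" unfolding g_def by (simp add: abs_mult)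
        also have "\<dots> \<le> 1 * B" using B pV \<open>v \<in> V\<close>
          by (intro mult_mono) auto
        finally show "\<bar>g v\<bar> \<le> B" by simp
      qed
      have gbd: "bounded (g ` V)" unfolding bounded_iff using gb by auto
      have gm: "g \<in> borel_measurable (restrict_space borel V)"
        by (rule borel_measurable_continuous_on_restrict[OF gc])
      have lim: "(\<lambda>n. integral\<^sup>L (\<nu>s n) g) \<longlonglongrightarrow> integral\<^sup>L \<nu> g"
        using assms(6) gc gbd unfolding weak_conv_on_def by blast
      have b1: "profit c V \<nu> p \<le> integral\<^sup>L \<nu> g"
        unfolding profit_eq
      proof (rule integral_mono)
        show "integrable \<nu> (\<lambda>v. indicator {v \<in> V. p \<le> v} v * (p - c v))"
          by (rule Delta_integrable[OF assms(5) ind_meas[OF cl assms(2), of p p], of B])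
             (use B B0 pV in \<open>auto simp: indicator_def\<close>)
        show "integrable \<nu> g" by (rule Delta_integrable[OF assms(5) gm gb])
        fix v assume "v \<in> space \<nu>"
        then have v: "v \<in> V" using Delta_space[OF assms(5)] by simp
        show "indicator {v \<in> V. p \<le> v} v * (p - c v) \<le> g v"
        proof -
          have "indicator {v \<in> V. p \<le> v} v = (if p \<le> v then 1 else (0::real))" using v by simp
          then show ?thesis using pw2[OF aq(1) assms(3)[rule_format, OF v]] unfolding g_def by simp
        qed
      qed
      have b2: "integral\<^sup>L (\<nu>s n) g - d \<le> profit_star c V (\<nu>s n)" for n
      proof -
        have Mn: "\<nu>s n \<in> Delta V" using assms(4) by simp
        interpret prob_space "\<nu>s n" using Delta_prob[OF Mn] .
        have "integral\<^sup>L (\<nu>s n) g - d = (LINT v|\<nu>s n. g v - d)"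
          using Delta_integrable[OF Mn gm gb] by (simp add: prob_space)
        also have "\<dots> \<le> profit c V (\<nu>s n) q"
          unfolding profit_eq
        proof (rule integral_mono)
          show "integrable (\<nu>s n) (\<lambda>v. indicator {v \<in> V. q \<le> v} v * (q - c v))"
            by (rule Delta_integrable[OF Mn ind_meas[OF cl assms(2), of q q], of B])
               (use B B0 aq(5) in \<open>auto simp: indicator_def\<close>)
          show "integrable (\<nu>s n) (\<lambda>v. g v - d)"
            using Delta_integrable[OF Mn gm gb] by simp
          fix v assume "v \<in> space (\<nu>s n)"
          then have v: "v \<in> V" using Delta_space[OF Mn] by simp
          show "g v - d \<le> indicator {v \<in> V. q \<le> v} v * (q - c v)"
          proof -
            have "indicator {v \<in> V. q \<le> v} v = (if q \<le> v then 1 else (0::real))" using v by simp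
            then show ?thesis using pw1[OF aq(1-4) assms(3)[rule_format, OF v]] aq(6) v unfolding g_def by simp
          qed
        qed
        also have "\<dots> \<le> profit_star c V (\<nu>s n)" by (rule ps_ge[OF Mn aq(5)])
        finally show ?thesis .
      qed
      have ev: "eventually (\<lambda>n. integral\<^sup>L \<nu> g - d < integral\<^sup>L (\<nu>s n) g) sequentially"
        using lim d by (intro order_tendstoD(1)) auto
      have "ereal (profit c V \<nu> p - e) \<le> L"
        unfolding L_def
      proof (rule Liminf_bounded)
        show "\<forall>\<^sub>F n in sequentially. ereal (profit c V \<nu> p - e) \<le> ereal (profit_star c V (\<nu>s n))"
          using ev
        proof eventually_elim
          case (elim n)
          then show ?case using b1 b2[of n] d_def by simp
        qed
      qed
      then show "profit c V \<nu> p \<le> l + e" using real by simp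
    qed
    have "profit_star c V \<nu> \<le> l"
      unfolding profit_star_def using Vne key by (intro cSUP_least) auto
    then show ?thesis using real unfolding L_def by simp
  qed
qed

end
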